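(* Let $z$ be an indeterminate and for $n\ge0$ let $P_n(x)=\sum_{k=0}^{n}\frac{(q^{-n},q^{n+1};q)_k\,(q(1+(q-1)x);q)_k\,q^k}{(q,q,q(1+(q-1)z);q)_k}$. Then the polynomials $\left(\frac1z\int_0^z\beta_n(y)\,dy\right)_{n\ge0}$ are the moments of the orthogonal polynomials $(P_n)_{n\ge0}$.
   Context: $q$ is an indeterminate; we work over $\mathbb{Q}(q,z)$. $(a;q)_k=(1-a)(1-qa)\cdots(1-q^{k-1}a)$, $(a_1,\dots,a_r;q)_k=\prod_i(a_i;q)_k$. The $q$-Bernoulli–Carlitz numbers $\beta_n\in\mathbb{Q}(q)$ are defined by: for all $n\ge0$, $q\sum_{k=0}^{n}\binom{n}{k}q^k\beta_k-\beta_n$ equals $q-1$ if $n=0$, $1$ if $n=1$, and $0$ if $n>1$. Let $\Psi$ be the linear form with $\Psi(x^n)=\beta_n$, extended linearly over $\mathbb{Q}(q)[z]$. The $q$-Bernoulli–Carlitz polynomials are $\beta_n(z)=\Psi\big((z+(z(q-1)+1)x)^n\big)$. A sequence $(m_n)$ with $m_0=1$ is the sequence of moments of $(P_n)$ ($\deg P_n=n$) if the linear functional $L$ with $L(x^n)=m_n$ satisfies $L(P_mP_n)=0$ for $m\ne n$ and $L(P_n^2)\ne0$. *)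

theory Defs
  imports "HOL-Computational_Algebra.Polynomial" "HOL-Computational_Algebra.Fraction_Field"
begin

text \<open>Q(q) = fraction field of Q[q];  Q(q,z) = fraction field of Q(q)[z].\<close>
type_synonym qfield = "rat poly fract"
type_synonym qzfield = "qfield poly fract"

definition qQ :: qfield where "qQ = Fract [:0, 1:] 1"
definition qK :: qzfield where "qK = Fract [: qQ :] 1"
definition zK :: qzfield where "zK = Fract [:0, 1:] 1"

definition qpoch :: "'a::comm_ring_1 \<Rightarrow> 'a \<Rightarrow> nat \<Rightarrow> 'a" where
  "qpoch a q k = (\<Prod>j<k. 1 - q ^ j * a)"

text \<open>The linear form Psi (x^n maps to beta n), extended Q(q)[z]-linearly; the argument is a
  polynomial in x whose coefficients are polynomials in z.\<close>
definition Psi :: "(nat \<Rightarrow> qfield) \<Rightarrow> qfield poly poly \<Rightarrow> qfield poly" where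
  "Psi \<beta> p = (\<Sum>i\<le>degree p. smult (\<beta> i) (coeff p i))"

text \<open>q-Bernoulli-Carlitz polynomial beta_n(z) = Psi((z + (z(q-1)+1) x)^n).\<close>
definition qbc_poly :: "(nat \<Rightarrow> qfield) \<Rightarrow> nat \<Rightarrow> qfield poly" where
  "qbc_poly \<beta> n = Psi \<beta> ([: [:0, 1:], [:1, qQ - 1:] :] ^ n)"

definition poly_integral :: "'a::field_char_0 poly \<Rightarrow> 'a poly" where
  "poly_integral f = (\<Sum>i\<le>degree f. monom (coeff f i / of_nat (i + 1)) (i + 1))"

definition mom_functional :: "(nat \<Rightarrow> 'a::comm_ring_1) \<Rightarrow> 'a poly \<Rightarrow> 'a" where
  "mom_functional mom p = (\<Sum>i\<le>degree p. coeff p i * mom i)"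

definition moments_of :: "(nat \<Rightarrow> 'a::comm_ring_1) \<Rightarrow> (nat \<Rightarrow> 'a poly) \<Rightarrow> bool" where
  "moments_of mom P \<longleftrightarrow> mom 0 = 1 \<and> (\<forall>n. degree (P n) = n) \<and>
     (\<forall>m n. m \<noteq> n \<longrightarrow> mom_functional mom (P m * P n) = 0) \<and>
     (\<forall>n. mom_functional mom (P n ^ 2) \<noteq> 0)"

definition P_seq :: "nat \<Rightarrow> qzfield poly" where
  "P_seq n = (\<Sum>k\<le>n.
     smult ((qpoch (inverse (qK ^ n)) qK k * qpoch (qK ^ (n + 1)) qK k * qK ^ k) /
            (qpoch qK qK k * qpoch qK qK k * qpoch (qK * (1 + (qK - 1) * zK)) qK k))
       (qpoch (smult qK [:1, qK - 1:]) [:qK:] k))"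

end

theory Submission
  imports Defs
begin

definition pq :: "'a::comm_ring_1 \<Rightarrow> 'a \<Rightarrow> nat \<Rightarrow> 'a poly" where
  "pq q c k = (\<Prod>j<k. [:1, - c * q ^ j:])"

lemma pq_0[simp]: "pq q c 0 = 1" by (simp add: pq_def)

lemma pq_Suc: "pq q c (Suc k) = pq q c k * [:1, - c * q ^ k:]"
  by (simp add: pq_def)

lemma pq_Suc_left: "pq q c (Suc k) = [:1, - c:] * pq q (c * q) k"
  unfolding pq_def prod.lessThan_Suc_shift by (simp add: mult.assoc)

lemma qpoch_0[simp]: "qpoch a q 0 = 1" by (simp add: qpoch_def)

lemma qpoch_Suc: "qpoch a q (Suc k) = qpoch a q k * (1 - q ^ k * a)"
  by (simp add: qpoch_def)

lemma qpoch_Suc_left: "qpoch a q (Suc k) = (1 - a) * qpoch (a * q) q k"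
  unfolding qpoch_def prod.lessThan_Suc_shift by (simp add: mult_ac)

lemma qpoch_eq_0: "qpoch (a::'a::idom) q k = 0 \<longleftrightarrow> (\<exists>j<k. q ^ j * a = 1)"
  unfolding qpoch_def by (auto simp: prod_zero_iff)

lemma poly_pq: "poly (pq q c k) x = qpoch (c * x) q k"
  unfolding pq_def qpoch_def poly_prod by (intro prod.cong) (auto simp: algebra_simps)

lemma pcompose_pq: "pcompose (pq q c k) [:0, q:] = pq q (c * q) k"
  unfolding pq_def pcompose_prod by (intro prod.cong) (auto simp: pcompose_pCons algebra_simps)

lemma degree_pq:
  fixes q c :: "'a::idom"
  assumes "q \<noteq> 0" "c \<noteq> 0"
  shows "degree (pq q c k) = k" and "lead_coeff (pq q c k) = (\<Prod>j<k. - c * q ^ j)"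
proof -
  have nz: "\<And>j. [:1, - c * q ^ j:] \<noteq> 0" by simp
  show "degree (pq q c k) = k" unfolding pq_def
    using assms by (subst degree_prod_eq_sum_degree) (auto simp: nz)
  show "lead_coeff (pq q c k) = (\<Prod>j<k. - c * q ^ j)"
    unfolding pq_def lead_coeff_prod using assms by (intro prod.cong) auto
qed

lemma mf_le:
  assumes "degree p \<le> N"
  shows "mom_functional m p = (\<Sum>i\<le>N. coeff p i * m i)"
  unfolding mom_functional_def
  by (rule sum.mono_neutral_left) (use assms in \<open>auto simp: coeff_eq_0\<close>)

lemma mf_add: "mom_functional m (p + r) = mom_functional m p + mom_functional m r"
proof -
  define N where "N = max (degree p) (degree r)"
  have "degree (p + r) \<le> N" using degree_add_le N_def by (metis max.cobounded1 max.cobounded2)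
  then show ?thesis
    by (simp add: mf_le[of _ N] N_def algebra_simps sum.distrib)
qed

lemma mf_smult: "mom_functional m (smult a p) = a * mom_functional m p"
  by (simp add: mf_le[of "smult a p" "degree p"] mf_le[of p "degree p"] degree_smult_le
     sum_distrib_left mult_ac)

lemma mf_0[simp]: "mom_functional m 0 = 0"
  by (simp add: mom_functional_def)

lemma mf_uminus: "mom_functional m (- p) = - mom_functional m p"
  using mf_smult[of m "-1" p] by simp

lemma mf_diff: "mom_functional m (p - r) = mom_functional m p - mom_functional m r"
  using mf_add[of m p "- r"] mf_uminus[of m r] by simp

lemma mf_sum: "mom_functional m (\<Sum>i\<in>A. f i) = (\<Sum>i\<in>A. mom_functional m (f i))"
  by (induction A rule: infinite_finite_induct) (auto simp: mf_add)

lemma mf_1: "mom_functional m 1 = m 0"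
  by (simp add: mom_functional_def)

definition nu :: "'a::field \<Rightarrow> 'a \<Rightarrow> nat \<Rightarrow> 'a" where
  "nu q z i = ((1 + (q - 1) * z) ^ Suc i - 1) / (z * (q ^ Suc i - 1))"

lemma qint:
  fixes q z :: "'a::field"
  assumes qn: "\<And>m. m > 0 \<Longrightarrow> q ^ m \<noteq> 1" and z: "z \<noteq> 0"
    and eq: "smult (1 - q) ([:0, 1:] * h) = g - pcompose g [:0, q:]"
  shows "mom_functional (nu q z) h = (poly g (1 + (q - 1) * z) - poly g 1) / (z * (q - 1))"
proof -
  define S where "S = 1 + (q - 1) * z"
  define N where "N = max (degree h) (degree g)"
  have q1: "q \<noteq> 1" using qn[of 1] by auto
  have ch: "(1 - q) * coeff h i = (1 - q ^ Suc i) * coeff g (Suc i)" for i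
  proof -
    have "coeff (smult (1 - q) ([:0, 1:] * h)) (Suc i) = coeff (g - pcompose g [:0, q:]) (Suc i)"
      using eq by simp
    then show ?thesis by (simp add: coeff_pcompose_linear algebra_simps)
  qed
  have ch2: "coeff h i * nu q z i = coeff g (Suc i) * (S ^ Suc i - 1) / (z * (q - 1))" for i
  proof -
    have a: "coeff h i = (1 - q ^ Suc i) * coeff g (Suc i) / (1 - q)"
      using ch[of i] q1 by (simp add: field_simps)
    have b: "q ^ Suc i - 1 \<noteq> 0" using qn[of "Suc i"] by simp
    have c: "nu q z i = (S ^ Suc i - 1) / (z * (q ^ Suc i - 1))" by (simp add: nu_def S_def)
    have d: "q - 1 \<noteq> 0" "1 - q \<noteq> 0" using q1 by auto
    have e: "(1 - q ^ Suc i) / (q ^ Suc i - 1) = - 1" using b by (simp add: field_simps)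
    have "coeff h i * nu q z i = coeff g (Suc i) * (S ^ Suc i - 1) / (z * (1 - q)) * ((1 - q ^ Suc i) / (q ^ Suc i - 1))"
      unfolding a c by (simp add: field_simps)
    also have "\<dots> = coeff g (Suc i) * (S ^ Suc i - 1) / (z * (q - 1))"
      unfolding e using d z by (simp add: field_simps)
    finally show ?thesis .
  qed
  have "mom_functional (nu q z) h = (\<Sum>i\<le>N. coeff g (Suc i) * (S ^ Suc i - 1) / (z * (q - 1)))"
    by (subst mf_le[of h N]) (auto simp: N_def ch2)
  also have "\<dots> = (\<Sum>i\<le>Suc N. coeff g i * (S ^ i - 1)) / (z * (q - 1))"
    by (subst sum.atMost_Suc_shift) (simp add: sum_divide_distrib)
  also have "(\<Sum>i\<le>Suc N. coeff g i * (S ^ i - 1)) = poly g S - poly g 1"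
  proof -
    have dg: "degree g \<le> Suc N" by (simp add: N_def)
    have "poly g S = (\<Sum>i\<le>Suc N. coeff g i * S ^ i)"
      unfolding poly_altdef by (rule sum.mono_neutral_left) (use dg in \<open>auto simp: coeff_eq_0\<close>)
    moreover have "poly g 1 = (\<Sum>i\<le>Suc N. coeff g i * 1 ^ i)"
      unfolding poly_altdef by (rule sum.mono_neutral_left) (use dg in \<open>auto simp: coeff_eq_0\<close>)
    ultimately show ?thesis by (simp add: algebra_simps sum_subtractf)
  qed
  finally show ?thesis by (simp add: S_def)
qed

lemma m0arith:
  fixes S z q a L P :: "'a::field"
  assumes "S \<noteq> 0" "z \<noteq> 0" "q \<noteq> 1" "a \<noteq> 1" "S - 1 = (q - 1) * z"
    and eq: "(a - 1) / (S * (1 - q)) * L = - ((1 - 1 / S) * P) / (z * (q - 1))"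
  shows "L = (1 - q) * P / (1 - a)"
proof -
  have q': "1 - q \<noteq> 0" "q - 1 \<noteq> 0" "a - 1 \<noteq> 0" "1 - a \<noteq> 0" using assms by auto
  have "(1 - 1 / S) = (q - 1) * z / S" using assms(1,5) by (simp add: field_simps)
  then have "- ((1 - 1 / S) * P) / (z * (q - 1)) = - ((q - 1) * z / S * P) / (z * (q - 1))" by simp
  also have "\<dots> = - (P / S)" using assms(1,2) q' by (simp add: field_simps)
  finally have "(a - 1) / (S * (1 - q)) * L = - (P / S)" using eq by simp
  then have "S * ((a - 1) / (S * (1 - q)) * L) = S * (- (P / S))" by simp
  moreover have "S * ((a - 1) / (S * (1 - q)) * L) = (a - 1) * L / (1 - q)" using assms(1) q' by simp
  moreover have "S * (- (P / S)) = - P" using assms(1) by simp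
  ultimately have "(a - 1) * L / (1 - q) = - P" by simp
  then have "(a - 1) * L = - (P * (1 - q))" using q' by (simp add: field_simps)
  then show ?thesis using q' by (simp add: field_simps)
qed

lemma frac_re:
  fixes c Q P R a b d :: "'a::field"
  shows "c * (Q * P / R) * (a * b / d) = c * (Q * a * (P * b) / (R * d))"
  by (simp add: mult_ac)


lemma solve: "(D::'a::field) \<noteq> 0 \<Longrightarrow> a * L1 = D * L2 \<Longrightarrow> L2 = a / D * L1"
  by (simp add: field_simps)

lemma lin2: "[:1, - a:] - [:1, - b:] = smult (b - a) [:0, 1::'a::comm_ring_1:]"
  by simp

lemma sm: "(c::'a::field) \<noteq> 0 \<Longrightarrow> smult c (X * smult (d / c) B) = B * smult d X"
  by (simp add: mult.commute)

lemma sm': "(c::'a::field) \<noteq> 0 \<Longrightarrow> smult c (X * smult (1 / c) Y) = Y * X"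
  by (simp add: mult.commute)

lemma small1: "(S::'a::field) \<noteq> 0 \<Longrightarrow> (q / S * x - 1 / S) / c = (q * x - 1) / (S * c)"
  by (cases "c = 0") (simp_all add: field_simps)

lemma lin3: "(x::'a::field) \<noteq> 0 \<Longrightarrow> [:a, b:] = [:a + b / x:] - smult (b / x) [:1, - x:]"
  by simp

lemma ring5: "A * B * ([:c:] - smult b D) = smult c (A * B) - smult b (A * D * B)"
  for A B D :: "'a::field poly"
  by (simp add: algebra_simps)

lemma quad0:
  fixes a c d :: "'a::field"
  shows "[:1, -1:] * [:1, - c:] - [:1, - a:] * [:1, - d:] =
         [:0, 1:] * [:(a - 1) + (d - c), c - a * d:]"
  by simp

lemma ratio:
  fixes X Y s :: "'a::field"
  assumes "s \<noteq> 0" "X \<noteq> 0" "1 - X * Y \<noteq> 0"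
  shows "((X - 1) + (Y - 1) / s + (1 - X * Y) / s / X) / ((1 - X * Y) / s / X) =
        (1 - X) * (1 - X * s) / (1 - X * Y)"
proof -
  have "((X - 1) + (Y - 1) / s + (1 - X * Y) / s / X) / ((1 - X * Y) / s / X)
      = (X * ((X - 1) * s + (Y - 1)) + (1 - X * Y)) / (1 - X * Y)"
    using assms by (simp add: field_simps)
  also have "X * ((X - 1) * s + (Y - 1)) + (1 - X * Y) = (1 - X) * (1 - X * s)"
    by (simp add: algebra_simps)
  finally show ?thesis .
qed

lemma ring4: "((a::'b::comm_ring) * A) * (c * B) - (A * b) * (B * d) = A * B * (a * c - b * d)"
  by (simp add: algebra_simps)

lemma ring2: "(a::'b::comm_ring) * B - B * b = B * (a - b)"
  by (simp add: algebra_simps)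

context
  fixes q z :: "'a::field"
  assumes q0: "q \<noteq> 0" and qn: "\<And>m. m > 0 \<Longrightarrow> q ^ m \<noteq> 1" and z0: "z \<noteq> 0"
    and S0: "1 + (q - 1) * z \<noteq> 0"
begin

abbreviation "SS \<equiv> 1 + (q - 1) * z"
abbreviation "Lam \<equiv> mom_functional (nu q z)"

lemma q1: "q \<noteq> 1" using qn[of 1] by auto

lemma M0: "Lam (pq q (q / SS) j) = (1 - q) * qpoch (q / SS) q j / (1 - q ^ Suc j)"
proof -
  define S where "S = SS"
  have S: "S \<noteq> 0" using S0 by (simp add: S_def)
  define B where "B = pq q (q / S) j"
  define g where "g = pq q (1 / S) (Suc j)"
  define h where "h = smult ((q / S * q ^ j - 1 / S) / (1 - q)) B"
  have qj: "1 - q ^ Suc j \<noteq> 0" using qn[of "Suc j"] by auto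
  have e1: "1 / S * q = q / S" by simp
  have g1: "g = [:1, - (1 / S):] * B" unfolding g_def B_def pq_Suc_left e1 ..
  have g2': "pcompose g [:0, q:] = pq q (q / S) (Suc j)"
    unfolding g_def pcompose_pq e1 ..
  have g2: "pcompose g [:0, q:] = B * [:1, - (q / S * q ^ j):]"
    unfolding g2' B_def pq_Suc by simp
  have "g - pcompose g [:0, q:] = B * ([:1, - (1 / S):] - [:1, - (q / S * q ^ j):])"
    by (simp only: g2, simp only: g1, rule ring2)
  also have "[:1, - (1 / S):] - [:1, - (q / S * q ^ j):] = smult (q / S * q ^ j - 1 / S) [:0, 1:]"
    by (rule lin2)
  finally have eq0: "g - pcompose g [:0, q:] = B * smult (q / S * q ^ j - 1 / S) [:0, 1:]" .
  have q1': "1 - q \<noteq> 0" using q1 by simp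
  have eq: "smult (1 - q) ([:0, 1:] * h) = g - pcompose g [:0, q:]"
    unfolding h_def sm[OF q1'] eq0 ..
  have "Lam h = (poly g S - poly g 1) / (z * (q - 1))"
    using qint[OF qn z0 eq] by (simp add: S_def)
  also have "poly g S = 0" unfolding g_def poly_pq using S by (simp add: qpoch_Suc_left)
  also have "poly g 1 = (1 - 1 / S) * qpoch (q / S) q j"
    unfolding g_def poly_pq by (simp add: qpoch_Suc_left e1)
  finally have "(q / S * q ^ j - 1 / S) / (1 - q) * Lam B = - ((1 - 1 / S) * qpoch (q / S) q j) / (z * (q - 1))"
    unfolding h_def mf_smult by simp
  then have "(q ^ Suc j - 1) / (S * (1 - q)) * Lam B = - ((1 - 1 / S) * qpoch (q / S) q j) / (z * (q - 1))"
    unfolding small1[OF S] by simp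
  moreover have "S - 1 = (q - 1) * z" by (simp add: S_def)
  moreover have "q ^ Suc j \<noteq> 1" using qj by auto
  ultimately have "Lam B = (1 - q) * qpoch (q / S) q j / (1 - q ^ Suc j)"
    using S z0 q1 by (intro m0arith) auto
  then show ?thesis unfolding B_def S_def .
qed

lemma Mstep:
  fixes k j :: nat
  defines "al \<equiv> (q * q ^ k - 1) + (q * q ^ j - 1) / SS"
      and "be \<equiv> (1 - q * q ^ k * (q * q ^ j)) / SS"
  shows "(al + be / (q * q ^ k)) * Lam (pq q q k * pq q (q / SS) j) =
         be / (q * q ^ k) * Lam (pq q q (Suc k) * pq q (q / SS) j)"
proof -
  define S where "S = SS"
  have S: "S \<noteq> 0" using S0 by (simp add: S_def)
  define A where "A = pq q q k"
  define B where "B = pq q (q / S) j"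
  define g where "g = pq q 1 (Suc k) * pq q (1 / S) (Suc j)"
  define h where "h = smult (1 / (1 - q)) (A * B * [:al, be:])"
  have e1: "1 / S * q = q / S" by simp
  have g1: "g = ([:1, -1:] * A) * ([:1, - (1 / S):] * B)"
    unfolding g_def A_def B_def pq_Suc_left e1 by simp
  have g2': "pcompose g [:0, q:] = pq q q (Suc k) * pq q (q / S) (Suc j)"
    unfolding g_def pcompose_mult pcompose_pq e1 by simp
  have g2: "pcompose g [:0, q:] = (A * [:1, - (q * q ^ k):]) * (B * [:1, - (q / S * q ^ j):])"
    unfolding g2' A_def B_def pq_Suc by (simp add: mult_ac)
  have "g - pcompose g [:0, q:] = A * B * ([:1, -1:] * [:1, - (1 / S):] - [:1, - (q * q ^ k):] * [:1, - (q / S * q ^ j):])"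
    by (simp only: g2, simp only: g1, rule ring4)
  also have "\<dots> = A * B * ([:0, 1:] * [:al, be:])"
  proof -
    have "al = (q * q ^ k - 1) + (q / S * q ^ j - 1 / S)"
      unfolding al_def S_def[symmetric] using S by (simp add: field_simps)
    moreover have "be = 1 / S - q * q ^ k * (q / S * q ^ j)"
      unfolding be_def S_def[symmetric] using S by (simp add: field_simps)
    ultimately show ?thesis by (simp only: quad0)
  qed
  finally have eq0: "g - pcompose g [:0, q:] = A * B * ([:0, 1:] * [:al, be:])" .
  have q1': "1 - q \<noteq> 0" using q1 by simp
  have eq: "smult (1 - q) ([:0, 1:] * h) = g - pcompose g [:0, q:]"
    unfolding h_def sm'[OF q1'] eq0 by (simp add: mult_ac)
  have "Lam h = (poly g S - poly g 1) / (z * (q - 1))"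
    using qint[OF qn z0 eq] by (simp add: S_def)
  also have "poly g S = 0" unfolding g_def poly_mult poly_pq using S by (simp add: qpoch_Suc_left)
  also have "poly g 1 = 0" unfolding g_def poly_mult poly_pq by (simp add: qpoch_Suc_left)
  finally have L0: "Lam (A * B * [:al, be:]) = 0" unfolding h_def mf_smult using q1 by simp
  define b' where "b' = be / (q * q ^ k)"
  have qk: "q * q ^ k \<noteq> 0" using q0 by simp
  have "A * B * [:al, be:] = smult (al + b') (A * B) - smult b' (pq q q (Suc k) * B)"
    unfolding lin3[OF qk, of al be] b'_def[symmetric] ring5 A_def pq_Suc by simp
  with L0 have "(al + b') * Lam (A * B) - b' * Lam (pq q q (Suc k) * B) = 0"
    by (simp add: mf_diff mf_smult)
  then show ?thesis unfolding A_def B_def b'_def S_def by simp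
qed

definition Mc :: "nat \<Rightarrow> nat \<Rightarrow> 'a" where
  "Mc k j = (1 - q) * qpoch (q / SS) q j / (1 - q ^ Suc j) *
      (qpoch q q k * qpoch (q * SS) q k / qpoch (q ^ (j + 2)) q k)"

lemma Mclosed: "Lam (pq q q k * pq q (q / SS) j) = Mc k j"
proof (induction k)
  case 0
  then show ?case by (simp add: M0 Mc_def)
next
  case (Suc k)
  have S: "SS \<noteq> 0" using S0 by simp
  define X where "X = q * q ^ k"
  define Y where "Y = q * q ^ j"
  have X: "X \<noteq> 0" using q0 by (simp add: X_def)
  have XY: "1 - X * Y \<noteq> 0" using qn[of "k + j + 2"] by (simp add: X_def Y_def power_add mult_ac)
  have st: "((X - 1) + (Y - 1) / SS + (1 - X * Y) / SS / X) * Lam (pq q q k * pq q (q / SS) j) =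
         (1 - X * Y) / SS / X * Lam (pq q q (Suc k) * pq q (q / SS) j)"
    using Mstep[of k j] by (simp add: X_def Y_def)
  have "Lam (pq q q (Suc k) * pq q (q / SS) j) =
        Lam (pq q q k * pq q (q / SS) j) * ((1 - X) * (1 - X * SS) / (1 - X * Y))"
  proof -
    have "(1 - X * Y) / SS / X \<noteq> 0" using XY S X by simp
    then have "Lam (pq q q (Suc k) * pq q (q / SS) j) = ((X - 1) + (Y - 1) / SS + (1 - X * Y) / SS / X) /
        ((1 - X * Y) / SS / X) * Lam (pq q q k * pq q (q / SS) j)"
      using st by (rule solve)
    also have "((X - 1) + (Y - 1) / SS + (1 - X * Y) / SS / X) / ((1 - X * Y) / SS / X) =
        (1 - X) * (1 - X * SS) / (1 - X * Y)"
      using S X XY by (rule ratio)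
    finally show ?thesis by simp
  qed
  also have "Lam (pq q q k * pq q (q / SS) j) = Mc k j" using Suc by simp
  also have "Mc k j * ((1 - X) * (1 - X * SS) / (1 - X * Y)) = Mc (Suc k) j"
  proof -
    have n1: "qpoch (q ^ (j + 2)) q k \<noteq> 0"
    proof
      assume "qpoch (q ^ (j + 2)) q k = 0"
      then obtain i where "q ^ i * q ^ (j + 2) = 1" unfolding qpoch_eq_0 by blast
      then have "q ^ (i + (j + 2)) = 1" by (simp only: power_add)
      then show False using qn[of "i + (j + 2)"] by simp
    qed
    have n2: "1 - q ^ Suc j \<noteq> 0" using qn[of "Suc j"] by auto
    have e: "qpoch (q ^ (j + 2)) q (Suc k) = qpoch (q ^ (j + 2)) q k * (1 - X * Y)"
      by (simp add: qpoch_Suc X_def Y_def power_add mult_ac)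
    have e2: "qpoch q q (Suc k) = qpoch q q k * (1 - X)" by (simp add: qpoch_Suc X_def mult_ac)
    have e3: "qpoch (q * SS) q (Suc k) = qpoch (q * SS) q k * (1 - X * SS)"
      by (simp add: qpoch_Suc X_def mult_ac)
    show ?thesis unfolding Mc_def e e2 e3 by (rule frac_re)
  qed
  finally show ?case .
qed

end

lemma cvar:
  fixes P Bk Qk Ck X Y q b c :: "'a::field"
  assumes nz: "Qk \<noteq> 0" "Ck \<noteq> 0" "1 - X * q \<noteq> 0" "1 - X * c \<noteq> 0" "X \<noteq> 0" "Y \<noteq> 0" "q \<noteq> 0"
  defines "T \<equiv> P * Bk * X / (Qk * Ck)"
    and "T' \<equiv> P * (1 - X * Y) * (Bk * (1 - X * b)) * (X * q) / (Qk * (1 - X * q) * (Ck * (1 - X * c)))"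
    and "T1 \<equiv> (1 - Y / q) * P * (Bk * (1 - X * b)) * (X * q) / (Qk * (1 - X * q) * (Ck * (1 - X * c)))"
  shows "(1 - c / Y) * T1 - (b - c / Y) * T' = T' * (1 - b * (X * q)) / (X * q) - T * (1 - b * X) / X"
proof -
  define E where "E = (1 - X * q) * (1 - X * c)"
  have E: "E \<noteq> 0" using nz by (simp add: E_def)
  define D where "D = Qk * (1 - X * q) * (Ck * (1 - X * c))"
  have D: "D \<noteq> 0" using nz by (simp add: D_def)
  have DE: "D = (Qk * Ck) * E" by (simp add: D_def E_def mult_ac)
  have T: "T = P * Bk * X * (1 - X * q) * (1 - X * c) / D"
    unfolding T_def DE using E by (simp add: E_def mult_ac)
  have T': "T' = P * (1 - X * Y) * (Bk * (1 - X * b)) * (X * q) / D" by (simp add: T'_def D_def)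
  have T1: "T1 = (1 - Y / q) * P * (Bk * (1 - X * b)) * (X * q) / D" by (simp add: T1_def D_def)
  have key: "(1 - c / Y) * ((1 - Y / q) * (X * q)) - (b - c / Y) * ((1 - X * Y) * (X * q))
     = (1 - X * Y) * (1 - b * (X * q)) - (1 - X * q) * (1 - X * c)"
    using nz by (simp add: field_simps)
  show ?thesis unfolding T T' T1 using D nz
    by (simp add: field_simps)
qed


definition tt :: "'a::field \<Rightarrow> 'a \<Rightarrow> 'a \<Rightarrow> nat \<Rightarrow> nat \<Rightarrow> 'a" where
  "tt q b c n k = qpoch (inverse (q ^ n)) q k * qpoch b q k * q ^ k / (qpoch q q k * qpoch c q k)"

context
  fixes q b c :: "'a::field"
  assumes q0: "q \<noteq> 0" and qn: "\<And>m. m > 0 \<Longrightarrow> q ^ m \<noteq> 1"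
    and cn: "\<And>i. c * q ^ i \<noteq> 1"
begin

lemma tt_0[simp]: "tt q b c n 0 = 1" by (simp add: tt_def)

lemma tt_vanish: "tt q b c n (Suc n) = 0"
proof -
  have "qpoch (inverse (q ^ n)) q (Suc n) = 0"
    unfolding qpoch_eq_0 using q0 by (intro exI[of _ n]) auto
  then show ?thesis by (simp add: tt_def)
qed

lemma Qk_nz: "qpoch q q k \<noteq> 0"
proof
  assume "qpoch q q k = 0"
  then obtain i where "q ^ i * q = 1" unfolding qpoch_eq_0 by blast
  then have "q ^ Suc i = 1" by (simp add: mult.commute)
  then show False using qn[of "Suc i"] by simp
qed

lemma Ck_nz: "qpoch c q k \<noteq> 0"
  unfolding qpoch_eq_0 using cn by (auto simp: mult.commute)

definition GG :: "nat \<Rightarrow> nat \<Rightarrow> 'a" where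
  "GG n k = (if k = 0 then 0 else tt q b c n (k - 1) * (1 - b * q ^ (k - 1)) / q ^ (k - 1))"

lemma cvstep: "(1 - c * q ^ n) * tt q b c (Suc n) k - (b - c * q ^ n) * tt q b c n k = GG n (Suc k) - GG n k"
proof (cases k)
  case 0
  then show ?thesis by (simp add: GG_def algebra_simps)
next
  case (Suc k)
  define X where "X = q ^ k"
  define Y where "Y = inverse (q ^ n)"
  have X: "X \<noteq> 0" "1 - X * q \<noteq> 0" "1 - X * c \<noteq> 0"
    using q0 qn[of "Suc k"] cn[of k] by (auto simp: X_def mult.commute)
  have Y: "Y \<noteq> 0" using q0 by (simp add: Y_def)
  have cY: "c * q ^ n = c / Y" by (simp add: Y_def divide_inverse)
  have t1: "tt q b c n (Suc k) = qpoch Y q k * (1 - X * Y) * (qpoch b q k * (1 - X * b)) * (X * q) /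
      (qpoch q q k * (1 - X * q) * (qpoch c q k * (1 - X * c)))"
    by (simp add: tt_def qpoch_Suc X_def Y_def mult_ac)
  have t0: "tt q b c n k = qpoch Y q k * qpoch b q k * X / (qpoch q q k * qpoch c q k)"
    by (simp add: tt_def X_def Y_def)
  have t2: "tt q b c (Suc n) (Suc k) = (1 - Y / q) * qpoch Y q k * (qpoch b q k * (1 - X * b)) * (X * q) /
      (qpoch q q k * (1 - X * q) * (qpoch c q k * (1 - X * c)))"
  proof -
    have "inverse (q ^ Suc n) * q = Y" using q0 by (simp add: Y_def field_simps)
    moreover have "1 - inverse (q ^ Suc n) = 1 - Y / q" by (simp add: Y_def field_simps)
    ultimately show ?thesis
      unfolding tt_def qpoch_Suc_left[of "inverse (q ^ Suc n)"]
      by (simp add: qpoch_Suc X_def mult_ac)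
  qed
  have g: "GG n (Suc (Suc k)) = tt q b c n (Suc k) * (1 - b * (X * q)) / (X * q)"
    "GG n (Suc k) = tt q b c n k * (1 - b * X) / X"
    by (simp_all add: GG_def X_def mult.commute)
  show ?thesis unfolding Suc cY g t1 t2 t0
    by (rule cvar[OF Qk_nz Ck_nz X(2) X(3) X(1) Y q0])
qed

lemma cv: "(\<Sum>k\<le>n. tt q b c n k) = (\<Prod>i<n. (b - c * q ^ i) / (1 - c * q ^ i))"
proof (induction n)
  case 0
  then show ?case by simp
next
  case (Suc n)
  have "(\<Sum>k<Suc (Suc n). (1 - c * q ^ n) * tt q b c (Suc n) k - (b - c * q ^ n) * tt q b c n k)
      = GG n (Suc (Suc n)) - GG n 0"
    unfolding cvstep by (rule sum_lessThan_telescope)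
  also have "\<dots> = 0" by (simp add: GG_def tt_vanish)
  moreover have "(\<Sum>k<Suc (Suc n). (1 - c * q ^ n) * tt q b c (Suc n) k - (b - c * q ^ n) * tt q b c n k)
      = (1 - c * q ^ n) * (\<Sum>k<Suc (Suc n). tt q b c (Suc n) k) - (b - c * q ^ n) * (\<Sum>k<Suc (Suc n). tt q b c n k)"
    by (simp only: sum_subtractf sum_distrib_left)
  ultimately have "(1 - c * q ^ n) * (\<Sum>k<Suc (Suc n). tt q b c (Suc n) k) =
      (b - c * q ^ n) * (\<Sum>k<Suc (Suc n). tt q b c n k)"
    by simp
  also have "(\<Sum>k<Suc (Suc n). tt q b c n k) = (\<Sum>k\<le>n. tt q b c n k)"
    by (simp add: tt_vanish lessThan_Suc_atMost)
  finally have e: "(1 - c * q ^ n) * (\<Sum>k\<le>Suc n. tt q b c (Suc n) k) =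
      (b - c * q ^ n) * (\<Sum>k\<le>n. tt q b c n k)"
    by (simp add: lessThan_Suc_atMost)
  have cq: "1 - c * q ^ n \<noteq> 0" using cn[of n] by simp
  from e have "(\<Sum>k\<le>Suc n. tt q b c (Suc n) k) = (b - c * q ^ n) / (1 - c * q ^ n) * (\<Sum>k\<le>n. tt q b c n k)"
    using cq by (simp add: field_simps)
  then show ?case using Suc by (simp add: mult.commute)
qed

end

lemma coef_ar:
  fixes Qk Pk a m R :: "'a::field"
  assumes "Qk \<noteq> 0" "Pk \<noteq> 0"
  shows "a / (Qk * Qk * Pk) * (m * (Qk * Pk / R)) = m * (a / (Qk * R))"
  using assms by (simp add: field_simps)

context
  fixes q z :: "'a::field"
  assumes q0: "q \<noteq> 0" and qn: "\<And>m. m > 0 \<Longrightarrow> q ^ m \<noteq> 1" and z0: "z \<noteq> 0"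
    and S0: "1 + (q - 1) * z \<noteq> 0"
    and H4: "\<And>m. (1 + (q - 1) * z) * q ^ Suc m \<noteq> 1"
    and H5: "\<And>m. q ^ Suc m \<noteq> 1 + (q - 1) * z"
begin

abbreviation "S \<equiv> 1 + (q - 1) * z"
abbreviation "L \<equiv> mom_functional (nu q z)"

definition Acoef :: "nat \<Rightarrow> nat \<Rightarrow> 'a" where
  "Acoef n k = (qpoch (inverse (q ^ n)) q k * qpoch (q ^ (n + 1)) q k * q ^ k) /
     (qpoch q q k * qpoch q q k * qpoch (q * S) q k)"

definition pp :: "nat \<Rightarrow> 'a poly" where
  "pp n = (\<Sum>k\<le>n. smult (Acoef n k) (pq q q k))"

lemma q1b: "q \<noteq> 1" using qn[of 1] by auto

lemma Qnz: "qpoch q q k \<noteq> 0"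
proof
  assume "qpoch q q k = 0"
  then obtain i where "q ^ i * q = 1" unfolding qpoch_eq_0 by blast
  then have "q ^ Suc i = 1" by (simp add: mult.commute)
  then show False using qn[of "Suc i"] by simp
qed

lemma Pnz: "qpoch (q * S) q k \<noteq> 0"
proof
  assume "qpoch (q * S) q k = 0"
  then obtain i where "q ^ i * (q * S) = 1" unfolding qpoch_eq_0 by blast
  then have "S * q ^ Suc i = 1" by (simp add: mult_ac)
  then show False using H4[of i] by simp
qed

lemma cn: "q ^ (j + 2) * q ^ i \<noteq> 1"
proof
  assume "q ^ (j + 2) * q ^ i = 1"
  then have "q ^ (j + 2 + i) = 1" by (simp only: power_add)
  then show False using qn[of "j + 2 + i"] by simp
qed

lemma LamB: "L (pp n * pq q (q / S) j) = (1 - q) * qpoch (q / S) q j / (1 - q ^ Suc j) *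
   (\<Prod>i<n. (q ^ (n + 1) - q ^ (j + 2) * q ^ i) / (1 - q ^ (j + 2) * q ^ i))"
proof -
  have "L (pp n * pq q (q / S) j) = (\<Sum>k\<le>n. Acoef n k * L (pq q q k * pq q (q / S) j))"
    unfolding pp_def sum_distrib_right mf_sum by (simp add: mf_smult)
  also have "\<dots> = (\<Sum>k\<le>n. (1 - q) * qpoch (q / S) q j / (1 - q ^ Suc j) * tt q (q ^ (n + 1)) (q ^ (j + 2)) n k)"
  proof (rule sum.cong[OF refl])
    fix k
    show "Acoef n k * L (pq q q k * pq q (q / S) j) =
      (1 - q) * qpoch (q / S) q j / (1 - q ^ Suc j) * tt q (q ^ (n + 1)) (q ^ (j + 2)) n k"
    proof -
      have M: "L (pq q q k * pq q (q / S) j) = Mc q z k j" by (rule Mclosed[OF q0 qn z0 S0])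
      have M2: "Mc q z k j = (1 - q) * qpoch (q / S) q j / (1 - q ^ Suc j) *
        (qpoch q q k * qpoch (q * S) q k / qpoch (q ^ (j + 2)) q k)"
        by (rule Mc_def[OF q0 qn z0 S0])
      show ?thesis unfolding M M2 Acoef_def tt_def
      by (rule coef_ar[OF Qnz Pnz])
    qed
  qed
  also have "\<dots> = (1 - q) * qpoch (q / S) q j / (1 - q ^ Suc j) * (\<Sum>k\<le>n. tt q (q ^ (n + 1)) (q ^ (j + 2)) n k)"
    by (simp add: sum_distrib_left)
  also have "(\<Sum>k\<le>n. tt q (q ^ (n + 1)) (q ^ (j + 2)) n k) =
      (\<Prod>i<n. (q ^ (n + 1) - q ^ (j + 2) * q ^ i) / (1 - q ^ (j + 2) * q ^ i))"
    by (rule cv[OF q0 qn cn])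
  finally show ?thesis .
qed

lemma LamB_0: "j < n \<Longrightarrow> L (pp n * pq q (q / S) j) = 0"
proof -
  assume jn: "j < n"
  have "(q ^ (n + 1) - q ^ (j + 2) * q ^ (n - 1 - j)) / (1 - q ^ (j + 2) * q ^ (n - 1 - j)) = 0"
  proof -
    have "j + 2 + (n - 1 - j) = n + 1" using jn by simp
    then have eq: "q ^ (j + 2) * q ^ (n - 1 - j) = q ^ (n + 1)" by (metis power_add)
    show ?thesis by (simp only: eq diff_self div_0)
  qed
  moreover have "n - 1 - j \<in> {..<n}" using jn by simp
  ultimately have "(\<Prod>i<n. (q ^ (n + 1) - q ^ (j + 2) * q ^ i) / (1 - q ^ (j + 2) * q ^ i)) = 0"
    by (intro prod_zero) auto
  then show ?thesis unfolding LamB by simp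
qed

lemma LamB_n: "L (pp n * pq q (q / S) n) \<noteq> 0"
proof -
  have a: "1 - q \<noteq> 0" using q1b by simp
  have b: "qpoch (q / S) q n \<noteq> 0"
  proof
    assume "qpoch (q / S) q n = 0"
    then obtain i where "q ^ i * (q / S) = 1" unfolding qpoch_eq_0 by blast
    then have "q ^ Suc i = S" using S0 by (simp add: field_simps mult.commute)
    then show False using H5[of i] by simp
  qed
  have c: "1 - q ^ Suc n \<noteq> 0" using qn[of "Suc n"] by simp
  have d: "(q ^ (n + 1) - q ^ (n + 2) * q ^ i) / (1 - q ^ (n + 2) * q ^ i) \<noteq> 0" for i
  proof -
    have "q ^ (n + 2) * q ^ i = q ^ (n + 1) * q ^ Suc i" by (simp add: power_add mult_ac)
    then have "q ^ (n + 1) - q ^ (n + 2) * q ^ i = q ^ (n + 1) * (1 - q ^ Suc i)" by (simp add: algebra_simps)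
    moreover have "q ^ (n + 1) \<noteq> 0" "1 - q ^ Suc i \<noteq> 0" using q0 qn[of "Suc i"] by auto
    moreover have "1 - q ^ (n + 2) * q ^ i \<noteq> 0" using cn[of n i] by simp
    ultimately show ?thesis by simp
  qed
  show ?thesis unfolding LamB using a b c d by (simp add: prod_zero_iff)
qed

lemma degree_pq': "degree (pq q (q / S) j) = j" "lead_coeff (pq q (q / S) j) \<noteq> 0"
proof -
  have "q / S \<noteq> 0" using q0 S0 by simp
  then show "degree (pq q (q / S) j) = j" "lead_coeff (pq q (q / S) j) \<noteq> 0"
    using degree_pq[OF q0, of "q / S" j] q0 by (auto simp: prod_zero_iff)
qed

lemma vanish: "degree f \<le> d \<Longrightarrow> d < n \<Longrightarrow> L (pp n * f) = 0"
proof (induction d arbitrary: f)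
  case 0
  then have "f = smult (coeff f 0) (pq q (q / S) 0)"
    using degree_0_id[of f] by simp
  then have "L (pp n * f) = coeff f 0 * L (pp n * pq q (q / S) 0)"
    by (metis mf_smult mult_smult_right)
  then show ?case using LamB_0[of 0 n] 0 by simp
next
  case (Suc d)
  define B where "B = pq q (q / S) (Suc d)"
  have dB: "degree B = Suc d" "lead_coeff B \<noteq> 0" unfolding B_def using degree_pq' by auto
  define c where "c = coeff f (Suc d) / lead_coeff B"
  define g where "g = f - smult c B"
  have "degree g \<le> d"
  proof (rule degree_le, intro allI impI)
    fix i assume "d < i"
    show "coeff g i = 0"
    proof (cases "i = Suc d")
      case True
      then show ?thesis using dB by (simp add: g_def c_def)
    next
      case False
      then have "i > Suc d" using \<open>d < i\<close> by simp
      then show ?thesis using Suc.prems dB by (simp add: g_def coeff_eq_0)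
    qed
  qed
  then have "L (pp n * g) = 0" using Suc by simp
  moreover have "L (pp n * B) = 0" unfolding B_def using LamB_0 Suc.prems by simp
  moreover have "f = g + smult c B" by (simp add: g_def)
  ultimately show ?case by (simp add: distrib_left mf_add mf_smult)
qed

lemma degree_pp: "degree (pp n) = n" and lc_pp: "coeff (pp n) n \<noteq> 0"
proof -
  have A: "Acoef n n \<noteq> 0"
  proof -
    have a: "qpoch (inverse (q ^ n)) q n \<noteq> 0"
    proof
      assume "qpoch (inverse (q ^ n)) q n = 0"
      then obtain j where j: "j < n" "q ^ j * inverse (q ^ n) = 1" unfolding qpoch_eq_0 by blast
      then have "q ^ j = q ^ n" using q0 by (simp add: field_simps)
      moreover have "q ^ n = q ^ j * q ^ (n - j)" using j by (simp add: power_add[symmetric])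
      ultimately have "q ^ (n - j) = 1" using q0 by simp
      then show False using qn[of "n - j"] j by simp
    qed
    have b: "qpoch (q ^ (n + 1)) q n \<noteq> 0"
    proof
      assume "qpoch (q ^ (n + 1)) q n = 0"
      then obtain j where "q ^ j * q ^ (n + 1) = 1" unfolding qpoch_eq_0 by blast
      then have "q ^ (j + (n + 1)) = 1" by (simp only: power_add)
      then show False using qn[of "j + (n + 1)"] by simp
    qed
    show ?thesis unfolding Acoef_def using a b Qnz Pnz q0 by simp
  qed
  have cf: "coeff (pp n) n = Acoef n n * lead_coeff (pq q q n)"
  proof -
    have "coeff (pp n) n = (\<Sum>k\<le>n. Acoef n k * coeff (pq q q k) n)"
      by (simp add: pp_def coeff_sum)
    also have "\<dots> = Acoef n n * coeff (pq q q n) n"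
      by (rule sum.remove[of _ n, THEN trans]) (auto intro!: sum.neutral simp: coeff_eq_0 degree_pq[OF q0 q0])
    finally show ?thesis using degree_pq[OF q0 q0] by simp
  qed
  have lc: "lead_coeff (pq q q n) \<noteq> 0" using degree_pq[OF q0 q0, of n] q0 by (auto simp: prod_zero_iff)
  show "coeff (pp n) n \<noteq> 0" using cf A lc by simp
  have "degree (pp n) \<le> n" unfolding pp_def
    by (rule degree_sum_le) (auto intro: order.trans[OF degree_smult_le] simp: degree_pq[OF q0 q0])
  then show "degree (pp n) = n" using le_degree[OF \<open>coeff (pp n) n \<noteq> 0\<close>] by simp
qed

lemma orth: "m \<noteq> n \<Longrightarrow> L (pp m * pp n) = 0"
proof -
  assume "m \<noteq> n"
  then consider "m < n" | "n < m" by linarith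
  then show ?thesis
  proof cases
    case 1
    then show ?thesis using vanish[of "pp m" m n] degree_pp by (simp add: mult.commute)
  next
    case 2
    then show ?thesis using vanish[of "pp n" n m] degree_pp by simp
  qed
qed

lemma norm: "L (pp n * pp n) \<noteq> 0"
proof -
  define B where "B = pq q (q / S) n"
  have dB: "degree B = n" "lead_coeff B \<noteq> 0" unfolding B_def using degree_pq' by auto
  define c where "c = coeff (pp n) n / lead_coeff B"
  have c0: "c \<noteq> 0" using lc_pp dB by (simp add: c_def)
  define g where "g = pp n - smult c B"
  have cg: "\<forall>i\<ge>n. coeff g i = 0"
  proof (intro allI impI)
    fix i assume "n \<le> i"
    show "coeff g i = 0"
    proof (cases "i = n")
      case True
      then show ?thesis using dB by (simp add: g_def c_def)
    next
      case False
      then have "i > n" using \<open>n \<le> i\<close> by simp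
      then show ?thesis using dB degree_pp[of n] by (simp add: g_def coeff_eq_0)
    qed
  qed
  have Lg: "L (pp n * g) = 0"
  proof (cases n)
    case 0
    have "g = 0" by (rule poly_eqI) (use cg 0 in auto)
    then show ?thesis by simp
  next
    case (Suc d)
    have "degree g \<le> d" by (rule degree_le) (use cg Suc in auto)
    then show ?thesis using vanish[of g d n] Suc by simp
  qed
  have "pp n = g + smult c B" by (simp add: g_def)
  then have "L (pp n * pp n) = L (pp n * g) + c * L (pp n * B)"
    by (metis distrib_left mf_add mf_smult mult_smult_right)
  also have "\<dots> = c * L (pp n * B)" using Lg by simp
  finally show ?thesis using c0 LamB_n unfolding B_def by simp
qed

end

lemma pcompose_pow: "pcompose (p ^ n) r = (pcompose p r) ^ n"
  by (induction n) (simp_all add: pcompose_1 pcompose_mult)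

lemma const_pow: "[:a:] ^ n = [:a ^ n:]" for a :: "'a::comm_semiring_1"
  by (induction n) (auto simp: mult.commute)

lemma pcompose_pq_U: "pcompose (pq q q k) [:1, q - 1:] = qpoch (smult q [:1, q - 1:]) [:q:] k"
  for q :: "'a::comm_ring_1"
  unfolding pq_def qpoch_def pcompose_prod
proof (intro prod.cong refl)
  fix j
  show "pcompose [:1, - q * q ^ j:] [:1, q - 1:] = 1 - [:q:] ^ j * smult q [:1, q - 1:]"
    by (simp add: pcompose_pCons const_pow algebra_simps)
qed

lemma pcompose_as_sum: "pcompose f U = (\<Sum>i\<le>degree f. smult (coeff f i) (U ^ i))"
proof -
  have "pcompose f U = pcompose (\<Sum>i\<le>degree f. monom (coeff f i) i) U"
    by (simp add: poly_as_sum_of_monoms)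
  also have "\<dots> = (\<Sum>i\<le>degree f. smult (coeff f i) (U ^ i))"
    unfolding pcompose_sum monom_altdef pcompose_smult pcompose_pow
    by (simp add: pcompose_pCons)
  finally show ?thesis .
qed

lemma transfer:
  assumes hm: "\<And>i. mom_functional mom (U ^ i) = nu' i"
  shows "mom_functional mom (pcompose f U) = mom_functional nu' f"
  unfolding pcompose_as_sum mf_sum mf_smult hm by (simp add: mom_functional_def)

context
  fixes q z :: "'a::field"
  assumes q0: "q \<noteq> 0" and qn: "\<And>m. m > 0 \<Longrightarrow> q ^ m \<noteq> 1" and z0: "z \<noteq> 0"
    and S0: "1 + (q - 1) * z \<noteq> 0"
    and H4: "\<And>m. (1 + (q - 1) * z) * q ^ Suc m \<noteq> 1"
    and H5: "\<And>m. q ^ Suc m \<noteq> 1 + (q - 1) * z"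
begin

theorem generic_moments:
  assumes hm: "\<And>i. mom_functional mom ([:1, q - 1:] ^ i) = nu q z i"
    and P: "\<And>n. Pn n = pcompose (pp q z n) [:1, q - 1:]"
  shows "moments_of mom Pn"
proof -
  have q1: "q - 1 \<noteq> 0" using qn[of 1] by auto
  have tr: "mom_functional mom (Pn m * Pn n) = mom_functional (nu q z) (pp q z m * pp q z n)" for m n
    unfolding P pcompose_mult[symmetric] by (rule transfer[OF hm])
  have "mom 0 = 1"
  proof -
    have "mom 0 = nu q z 0" using hm[of 0] by (simp add: mf_1)
    also have "\<dots> = 1" using q1 z0 by (simp add: nu_def)
    finally show ?thesis .
  qed
  moreover have "degree (Pn n) = n" for n
    unfolding P degree_pcompose using degree_pp[OF q0 qn z0 S0 H4 H5, of n] q1 by simp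
  moreover have "mom_functional mom (Pn m * Pn n) = 0" if "m \<noteq> n" for m n
    unfolding tr by (rule orth[OF q0 qn z0 S0 H4 H5 that])
  moreover have "mom_functional mom (Pn n ^ 2) \<noteq> 0" for n
    unfolding power2_eq_square tr by (rule norm[OF q0 qn z0 S0 H4 H5])
  ultimately show ?thesis unfolding moments_of_def by blast
qed

end

lemma coeff_lin_pow: "coeff ([:1, b:] ^ m) i = of_nat (m choose i) * b ^ i"
  for b :: "'a::comm_ring_1"
proof (induction m arbitrary: i)
  case 0
  then show ?case by (cases i) auto
next
  case (Suc m)
  have e: "[:1, b:] ^ Suc m = [:1, b:] ^ m + pCons 0 (smult b ([:1, b:] ^ m))"
    by (simp add: algebra_simps)
  show ?case
  proof (cases i)
    case 0
    then show ?thesis unfolding e using Suc[of 0] by simp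
  next
    case (Suc j)
    then show ?thesis unfolding e using Suc.IH[of "Suc j"] Suc.IH[of j]
      by (simp add: algebra_simps)
  qed
qed

lemma smult_sum_r: "smult c (sum f A) = (\<Sum>i\<in>A. smult c (f i))"
  by (induction A rule: infinite_finite_induct) (auto simp: smult_add_right)

lemma degree_lin_pow: "degree ([:1, b:] ^ m) \<le> m"
  for b :: "'a::comm_ring_1"
  using degree_power_le[of "[:1, b:]" m] by (simp add: degree_pCons_le order.trans)

lemma pcompose_as_sum_le:
  assumes "degree f \<le> N"
  shows "pcompose f U = (\<Sum>i\<le>N. smult (coeff f i) (U ^ i))"
  unfolding pcompose_as_sum
  by (rule sum.mono_neutral_left) (use assms in \<open>auto simp: coeff_eq_0\<close>)

lemma coeff_poly_integral:
  "coeff (poly_integral f) k = (if k = 0 then 0 else coeff f (k - 1) / of_nat k)"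
proof -
  have "coeff (poly_integral f) k = (\<Sum>i\<le>degree f. if i + 1 = k then coeff f i / of_nat (i + 1) else 0)"
    unfolding poly_integral_def coeff_sum by (intro sum.cong) auto
  also have "\<dots> = (if k = 0 then 0 else coeff f (k - 1) / of_nat k)"
    by (cases k) (auto simp: coeff_eq_0)
  finally show ?thesis .
qed

lemma poly_integral_add: "poly_integral (f + g) = poly_integral f + poly_integral g"
  by (rule poly_eqI) (simp add: coeff_poly_integral add_divide_distrib)

lemma poly_integral_smult: "poly_integral (smult a f) = smult a (poly_integral f)"
  by (rule poly_eqI) (simp add: coeff_poly_integral)

lemma poly_integral_0[simp]: "poly_integral 0 = 0"
  by (rule poly_eqI) (simp add: coeff_poly_integral)

lemma poly_integral_sum: "poly_integral (\<Sum>i\<in>A. f i) = (\<Sum>i\<in>A. poly_integral (f i))"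
  by (induction A rule: infinite_finite_induct) (auto simp: poly_integral_add)

lemma poly_integral_pow:
  fixes b :: "'a::field_char_0"
  shows "smult (of_nat (Suc m) * b) (poly_integral ([:1, b:] ^ m)) = [:1, b:] ^ Suc m - 1"
proof (rule poly_eqI)
  fix k
  show "coeff (smult (of_nat (Suc m) * b) (poly_integral ([:1, b:] ^ m))) k = coeff ([:1, b:] ^ Suc m - 1) k"
  proof (cases k)
    case 0
    then show ?thesis by (simp add: coeff_poly_integral coeff_lin_pow)
  next
    case (Suc j)
    have e: "of_nat (Suc m) * of_nat (m choose j) = (of_nat (Suc m choose Suc j) * of_nat (Suc j) :: 'a)"
      by (metis Suc_times_binomial_eq of_nat_mult)
    have l: "coeff (smult (of_nat (Suc m) * b) (poly_integral ([:1, b:] ^ m))) k =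
        of_nat (Suc m) * b * (of_nat (m choose j) * b ^ j / of_nat (Suc j))"
      unfolding coeff_smult coeff_poly_integral Suc coeff_lin_pow by simp
    have r: "coeff ([:1, b:] ^ Suc m - 1) k = of_nat (Suc m choose Suc j) * b ^ Suc j"
      unfolding Suc coeff_diff coeff_lin_pow by simp
    have nz: "(of_nat (Suc j) :: 'a) \<noteq> 0" by (rule of_nat_neq_0)
    have "of_nat (Suc m) * b * (of_nat (m choose j) * b ^ j / of_nat (Suc j)) =
        (of_nat (Suc m) * of_nat (m choose j)) * b ^ Suc j / of_nat (Suc j)"
      by (simp add: mult_ac)
    also have "\<dots> = of_nat (Suc m choose Suc j) * b ^ Suc j"
      unfolding e using nz by simp
    finally show ?thesis unfolding l r .
  qed
qed

lemma partA_lin: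
  fixes \<beta> :: "nat \<Rightarrow> 'a::field" and q :: 'a
  assumes beta: "\<And>n. q * (\<Sum>k\<le>n. of_nat (n choose k) * q ^ k * \<beta> k) - \<beta> n
                 = (if n = 0 then q - 1 else if n = 1 then 1 else 0)"
  shows "mom_functional \<beta> (smult q (pcompose p [:1, q:]) - p) = (q - 1) * coeff p 0 + coeff p 1"
proof -
  define N where "N = Suc (degree p)"
  have dN: "degree p \<le> N" by (simp add: N_def)
  have mono: "mom_functional \<beta> (smult q ([:1, q:] ^ i) - [:0, 1:] ^ i) =
      (if i = 0 then q - 1 else if i = 1 then 1 else 0)" for i
  proof -
    have "mom_functional \<beta> ([:1, q:] ^ i) = (\<Sum>k\<le>i. of_nat (i choose k) * q ^ k * \<beta> k)"
      by (subst mf_le[OF degree_lin_pow]) (simp add: coeff_lin_pow)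
    moreover have "mom_functional \<beta> ([:0, 1:] ^ i) = \<beta> i"
    proof -
      have "[:0, 1:] ^ i = (monom 1 i :: 'a poly)" by (simp add: monom_altdef)
      moreover have "(\<Sum>ia\<le>i. (if i = ia then 1 else 0) * \<beta> ia) = (\<Sum>ia\<le>i. if ia = i then \<beta> ia else 0)"
        by (intro sum.cong) auto
      ultimately show ?thesis unfolding mom_functional_def by (simp add: degree_monom_eq)
    qed
    ultimately show ?thesis using beta[of i] by (simp add: mf_diff mf_smult)
  qed
  have "smult q (pcompose p [:1, q:]) - p =
      (\<Sum>i\<le>N. smult (coeff p i) (smult q ([:1, q:] ^ i) - [:0, 1:] ^ i))"
  proof -
    have "p = pcompose p [:0, 1:]" by simp
    also have "\<dots> = (\<Sum>i\<le>N. smult (coeff p i) ([:0, 1:] ^ i))" by (rule pcompose_as_sum_le[OF dN])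
    finally have p: "p = (\<Sum>i\<le>N. smult (coeff p i) ([:0, 1:] ^ i))" .
    show ?thesis
      apply (subst pcompose_as_sum_le[OF dN])
      apply (subst (2) p)
      by (simp add: smult_diff_right sum_subtractf smult_sum_r mult.commute)
  qed
  then have "mom_functional \<beta> (smult q (pcompose p [:1, q:]) - p) =
      (\<Sum>i\<le>N. coeff p i * (if i = 0 then q - 1 else if i = 1 then 1 else 0))"
    by (simp add: mf_sum mf_smult mono)
  also have "\<dots> = (\<Sum>i\<le>N. (if i = 0 then coeff p 0 * (q - 1) else 0) + (if i = 1 then coeff p 1 else 0))"
    by (intro sum.cong) auto
  also have "\<dots> = (q - 1) * coeff p 0 + coeff p 1"
    by (simp add: sum.distrib N_def mult.commute)
  finally show ?thesis .
qed

lemma partA: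
  fixes \<beta> :: "nat \<Rightarrow> 'a::field" and q :: 'a
  assumes beta: "\<And>n. q * (\<Sum>k\<le>n. of_nat (n choose k) * q ^ k * \<beta> k) - \<beta> n
                 = (if n = 0 then q - 1 else if n = 1 then 1 else 0)"
  shows "(q ^ Suc m - 1) * mom_functional \<beta> ([:1, q - 1:] ^ m) = (q - 1) * of_nat (Suc m)"
proof -
  have pc: "pcompose ([:1, q - 1:] ^ m) [:1, q:] = smult (q ^ m) ([:1, q - 1:] ^ m)"
  proof -
    have "pcompose [:1, q - 1:] [:1, q:] = smult q [:1, q - 1:]"
      by (simp add: pcompose_pCons algebra_simps)
    then have "pcompose [:1, q - 1:] [:1, q:] = smult q [:1, q - 1:]" .
    moreover have "[:q, q * (q - 1):] = smult q [:1, q - 1:]" by simp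
    ultimately show ?thesis by (simp only: pcompose_pow smult_power)
  qed
  have "mom_functional \<beta> (smult q (pcompose ([:1, q - 1:] ^ m) [:1, q:]) - [:1, q - 1:] ^ m) =
      (q ^ Suc m - 1) * mom_functional \<beta> ([:1, q - 1:] ^ m)"
    unfolding pc by (simp add: mf_diff mf_smult algebra_simps)
  moreover have "coeff ([:1, q - 1:] ^ m) 0 = 1" "coeff ([:1, q - 1:] ^ m) 1 = of_nat m * (q - 1)"
    by (simp_all add: coeff_lin_pow)
  ultimately show ?thesis using partA_lin[OF beta, of "[:1, q - 1:] ^ m"]
    by (simp only:) (simp add: algebra_simps)
qed

definition ev :: "qfield poly \<Rightarrow> qzfield" where "ev p = Fract p 1"
definition emb :: "qfield \<Rightarrow> qzfield" where "emb c = ev [:c:]"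

lemma ev_add: "ev (a + b) = ev a + ev b" by (simp add: ev_def)
lemma ev_mult: "ev (a * b) = ev a * ev b" by (simp add: ev_def)
lemma ev_diff: "ev (a - b) = ev a - ev b" by (simp add: ev_def)
lemma ev_1: "ev 1 = 1" by (simp add: ev_def fract_collapse)
lemma ev_0: "ev 0 = 0" by (simp add: ev_def fract_collapse)
lemma ev_pow: "ev (a ^ n) = ev a ^ n" by (induction n) (simp_all add: ev_1 ev_mult)
lemma ev_sum: "ev (\<Sum>i\<in>A. f i) = (\<Sum>i\<in>A. ev (f i))"
  by (induction A rule: infinite_finite_induct) (simp_all add: ev_0 ev_add)
lemma ev_inj: "ev a = ev b \<Longrightarrow> a = b" by (simp add: ev_def eq_fract)
lemma ev_smult: "ev (smult a p) = emb a * ev p"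
  by (simp add: emb_def ev_mult[symmetric])

lemma emb_add: "emb (a + b) = emb a + emb b" by (simp add: emb_def ev_add[symmetric])
lemma emb_mult: "emb (a * b) = emb a * emb b" by (simp add: emb_def ev_mult[symmetric] mult.commute)
lemma emb_diff: "emb (a - b) = emb a - emb b" by (simp add: emb_def ev_diff[symmetric])
lemma emb_1: "emb 1 = 1" by (simp add: emb_def ev_1[symmetric] one_pCons)
lemma emb_pow: "emb (a ^ n) = emb a ^ n" by (simp add: emb_def ev_pow[symmetric] const_pow)
lemma emb_of_nat: "emb (of_nat n) = of_nat n"
  by (simp add: emb_def ev_def of_nat_poly[symmetric] Fract_of_nat_eq)
lemma emb_inj: "emb a = emb b \<Longrightarrow> a = b" unfolding emb_def by (drule ev_inj) simp

lemma qK_emb: "qK = emb qQ" by (simp add: qK_def emb_def ev_def)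
lemma zK_ev: "zK = ev [:0, 1:]" by (simp add: zK_def ev_def)

lemma S_ev: "1 + (qK - 1) * zK = ev [:1, qQ - 1:]"
proof -
  have "[:1, qQ - 1:] = 1 + ([:qQ:] - 1) * [:0, 1:]"
    by (rule poly_eqI) (simp add: coeff_pCons split: nat.split)
  then have "ev [:1, qQ - 1:] = ev (1 + ([:qQ:] - 1) * [:0, 1:])" by simp
  also have "\<dots> = 1 + (qK - 1) * zK"
    by (simp only: ev_add ev_mult ev_diff ev_1 qK_emb emb_def zK_ev)
  finally show ?thesis ..
qed

lemma qQ_pow: "qQ ^ m = Fract ([:0, 1:] ^ m) 1"
  by (induction m) (simp_all add: qQ_def fract_collapse)

lemma qQ0: "qQ \<noteq> 0" by (simp add: qQ_def eq_fract fract_expand)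

lemma qQn: "m > 0 \<Longrightarrow> qQ ^ m \<noteq> 1"
proof
  assume m: "m > 0" and "qQ ^ m = 1"
  then have "Fract ([:0, 1:] ^ m) 1 = Fract (1 :: rat poly) 1" by (simp add: qQ_pow fract_collapse)
  then have "[:0, 1:] ^ m = (1 :: rat poly)" by (simp add: eq_fract)
  then have "degree ([:0, 1 :: rat:] ^ m) = 0" by simp
  moreover have "degree ([:0, 1 :: rat:] ^ m) = m" by (simp add: degree_power_eq)
  ultimately show False using m by simp
qed

lemma qQ1: "qQ - 1 \<noteq> 0" using qQn[of 1] by simp

lemma qK0: "qK \<noteq> 0"
proof
  assume "qK = 0"
  then have "emb qQ = emb 0" by (simp add: qK_emb emb_def ev_0)
  then show False using qQ0 by (auto dest: emb_inj)
qed

lemma qKn: "m > 0 \<Longrightarrow> qK ^ m \<noteq> 1"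
proof
  assume m: "m > 0" and "qK ^ m = 1"
  then have "emb (qQ ^ m) = emb 1" by (simp add: qK_emb emb_pow emb_1)
  then show False using qQn[OF m] by (auto dest: emb_inj)
qed

lemma zK0: "zK \<noteq> 0"
proof
  assume "zK = 0"
  then have "ev [:0, 1:] = ev 0" by (simp add: zK_ev ev_0)
  then show False by (auto dest: ev_inj)
qed

lemma SK0: "1 + (qK - 1) * zK \<noteq> 0"
proof
  assume "1 + (qK - 1) * zK = 0"
  then have "ev [:1, qQ - 1:] = ev 0" by (simp add: S_ev ev_0)
  then show False by (auto dest: ev_inj)
qed

lemma H4K: "(1 + (qK - 1) * zK) * qK ^ Suc m \<noteq> 1"
proof
  assume "(1 + (qK - 1) * zK) * qK ^ Suc m = 1"
  moreover have "(1 + (qK - 1) * zK) * qK ^ Suc m = ev ([:1, qQ - 1:] * [:qQ ^ Suc m:])"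
  proof -
    have "qK ^ Suc m = emb (qQ ^ Suc m)" by (simp only: qK_emb emb_pow)
    then show ?thesis by (simp only: S_ev ev_mult emb_def)
  qed
  ultimately have "ev ([:1, qQ - 1:] * [:qQ ^ Suc m:]) = ev 1" by (simp add: ev_1)
  then have "[:1, qQ - 1:] * [:qQ ^ Suc m:] = 1" by (rule ev_inj)
  then have "coeff ([:1, qQ - 1:] * [:qQ ^ Suc m:]) 1 = coeff 1 1" by simp
  then show False using qQ1 qQ0 by simp
qed

lemma H5K: "qK ^ Suc m \<noteq> 1 + (qK - 1) * zK"
proof
  assume "qK ^ Suc m = 1 + (qK - 1) * zK"
  moreover have "qK ^ Suc m = ev [:qQ ^ Suc m:]"
  proof -
    have "qK ^ Suc m = emb (qQ ^ Suc m)" by (simp only: qK_emb emb_pow)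
    then show ?thesis unfolding emb_def .
  qed
  ultimately have "ev [:qQ ^ Suc m:] = ev [:1, qQ - 1:]" by (simp only: S_ev)
  then have "[:qQ ^ Suc m:] = [:1, qQ - 1:]" by (rule ev_inj)
  then show False using qQ1 by simp
qed

lemma P_seq_eq: "P_seq n = pcompose (pp qK zK n) [:1, qK - 1:]"
proof -
  have a: "pp qK zK n = (\<Sum>k\<le>n. smult (Acoef qK zK n k) (pq qK qK k))"
    by (rule pp_def[OF qK0 qKn zK0 SK0 H4K H5K])
  have b: "Acoef qK zK n k = (qpoch (inverse (qK ^ n)) qK k * qpoch (qK ^ (n + 1)) qK k * qK ^ k) /
     (qpoch qK qK k * qpoch qK qK k * qpoch (qK * (1 + (qK - 1) * zK)) qK k)" for k
    by (rule Acoef_def[OF qK0 qKn zK0 SK0 H4K H5K])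
  show ?thesis unfolding a pcompose_sum pcompose_smult pcompose_pq_U b P_seq_def ..
qed

lemma Psi_le: "degree p \<le> N \<Longrightarrow> Psi \<beta> p = (\<Sum>i\<le>N. smult (\<beta> i) (coeff p i))"
  unfolding Psi_def by (rule sum.mono_neutral_left) (auto simp: coeff_eq_0)

lemma Psi_add: "Psi \<beta> (p + r) = Psi \<beta> p + Psi \<beta> r"
proof -
  define N where "N = max (degree p) (degree r)"
  have "degree (p + r) \<le> N" using degree_add_le N_def by (metis max.cobounded1 max.cobounded2)
  then show ?thesis
    by (simp add: Psi_le[of _ N] N_def smult_add_right sum.distrib)
qed

lemma Psi_smult: "Psi \<beta> (smult a p) = a * Psi \<beta> p"
  by (simp add: Psi_le[of "smult a p" "degree p"] Psi_le[of p "degree p"] degree_smult_le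
     sum_distrib_left)

lemma Psi_0: "Psi \<beta> 0 = 0" by (simp add: Psi_def)

lemma Psi_sum: "Psi \<beta> (\<Sum>i\<in>A. f i) = (\<Sum>i\<in>A. Psi \<beta> (f i))"
  by (induction A rule: infinite_finite_induct) (auto simp: Psi_add Psi_0)

lemma const_sum: "(\<Sum>i\<in>A. [:f i:]) = [:\<Sum>i\<in>A. f i:]"
  by (induction A rule: infinite_finite_induct) auto

context
  fixes \<beta> :: "nat \<Rightarrow> qfield" and m :: nat
begin

definition "WW = [:1, qQ - 1:]"
definition "VV = [:1, [:qQ - 1:]:]"
definition "cc n = coeff (WW ^ m) n"
definition "ww = mom_functional \<beta> (WW ^ m)"

lemma cc_eq: "cc n = of_nat (m choose n) * (qQ - 1) ^ n"
  by (simp add: cc_def WW_def coeff_lin_pow)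

lemma PsiV: "Psi \<beta> (VV ^ m) = [:ww:]"
proof -
  have "Psi \<beta> (VV ^ m) = (\<Sum>i\<le>m. smult (\<beta> i) (coeff (VV ^ m) i))"
    unfolding VV_def by (rule Psi_le[OF degree_lin_pow])
  also have "\<dots> = (\<Sum>i\<le>m. [:cc i * \<beta> i:])"
    by (intro sum.cong) (simp_all add: VV_def coeff_lin_pow cc_eq of_nat_poly const_pow mult.commute)
  also have "\<dots> = [:ww:]"
    unfolding const_sum ww_def WW_def cc_def by (subst mf_le[OF degree_lin_pow]) simp
  finally show ?thesis .
qed

lemma sumB: "(\<Sum>n\<le>m. smult (cc n) (qbc_poly \<beta> n)) = smult ww (WW ^ m)"
proof -
  define B where "B = [: [:0, 1:], [:1, qQ - 1:] :]"
  have "(\<Sum>n\<le>m. smult (cc n) (qbc_poly \<beta> n)) = (\<Sum>n\<le>m. Psi \<beta> (smult [:cc n:] (B ^ n)))"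
    by (intro sum.cong) (simp_all add: qbc_poly_def B_def Psi_smult)
  also have "\<dots> = Psi \<beta> (\<Sum>n\<le>m. smult [:cc n:] (B ^ n))" by (simp add: Psi_sum)
  also have "(\<Sum>n\<le>m. smult [:cc n:] (B ^ n)) = (smult [:qQ - 1:] B + 1) ^ m"
    unfolding binomial_ring
    by (intro sum.cong) (simp_all add: cc_eq smult_power of_nat_poly const_pow)
  also have "smult [:qQ - 1:] B + 1 = smult WW VV"
    by (simp add: B_def WW_def VV_def one_pCons algebra_simps)
  also have "Psi \<beta> ((smult WW VV) ^ m) = WW ^ m * [:ww:]"
    unfolding smult_power Psi_smult PsiV ..
  finally show ?thesis by (simp add: mult.commute)
qed

end

lemma nu_ar:
  fixes a D K E T z :: "'a::field"
  assumes "D \<noteq> 0" "a * D = K" "K * E = T"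
  shows "a * (E / z) = T / (z * D)"
  using assms by (auto simp: field_simps)

lemma partB:
  fixes \<beta> :: "nat \<Rightarrow> qfield"
  assumes beta: "\<And>n. qQ * (\<Sum>k\<le>n. of_nat (n choose k) * qQ ^ k * \<beta> k) - \<beta> n
                 = (if n = 0 then qQ - 1 else if n = 1 then 1 else 0)"
  shows "mom_functional (\<lambda>n. Fract (poly_integral (qbc_poly \<beta> n)) 1 / zK) ([:1, qK - 1:] ^ m) = nu qK zK m"
proof -
  define mom where "mom = (\<lambda>n. Fract (poly_integral (qbc_poly \<beta> n)) 1 / zK)"
  have ce: "coeff ([:1, qK - 1:] ^ m) n = emb (cc m n)" for n
    by (simp add: coeff_lin_pow cc_eq emb_mult emb_of_nat emb_pow emb_diff emb_1 qK_emb)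
  have "mom_functional mom ([:1, qK - 1:] ^ m) = (\<Sum>n\<le>m. emb (cc m n) * mom n)"
    by (subst mf_le[OF degree_lin_pow]) (simp add: ce)
  also have "\<dots> = ev (poly_integral (\<Sum>n\<le>m. smult (cc m n) (qbc_poly \<beta> n))) / zK"
    by (simp add: mom_def poly_integral_sum poly_integral_smult ev_sum ev_smult sum_divide_distrib
       ev_def[symmetric])
  also have "\<dots> = emb (ww \<beta> m) * (ev (poly_integral (WW ^ m)) / zK)"
    unfolding sumB poly_integral_smult ev_smult by simp
  also have "\<dots> = ((1 + (qK - 1) * zK) ^ Suc m - 1) / (zK * (qK ^ Suc m - 1))"
  proof (rule nu_ar)
    show "qK ^ Suc m - 1 \<noteq> 0" using qKn[of "Suc m"] by simp
    have "(qQ ^ Suc m - 1) * ww \<beta> m = (qQ - 1) * of_nat (Suc m)"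
      unfolding ww_def WW_def by (rule partA[OF beta])
    then have "emb ((qQ ^ Suc m - 1) * ww \<beta> m) = emb ((qQ - 1) * of_nat (Suc m))" by simp
    then show "emb (ww \<beta> m) * (qK ^ Suc m - 1) = emb ((qQ - 1) * of_nat (Suc m))"
      by (simp add: emb_mult emb_diff emb_pow emb_1 qK_emb mult.commute)
    have pi: "smult ((qQ - 1) * of_nat (Suc m)) (poly_integral (WW ^ m)) = WW ^ Suc m - 1"
      using poly_integral_pow[of m "qQ - 1"] unfolding WW_def by (simp only: mult.commute)
    have e: "ev (WW ^ Suc m - 1) = (1 + (qK - 1) * zK) ^ Suc m - 1"
      by (simp only: ev_diff ev_pow ev_1 WW_def S_ev)
    have "emb ((qQ - 1) * of_nat (Suc m)) * ev (poly_integral (WW ^ m)) =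
        ev (smult ((qQ - 1) * of_nat (Suc m)) (poly_integral (WW ^ m)))"
      by (simp only: ev_smult)
    also have "\<dots> = (1 + (qK - 1) * zK) ^ Suc m - 1" unfolding pi e ..
    finally show "emb ((qQ - 1) * of_nat (Suc m)) * ev (poly_integral (WW ^ m)) =
        (1 + (qK - 1) * zK) ^ Suc m - 1" .
  qed
  also have "\<dots> = nu qK zK m" by (simp add: nu_def)
  finally show ?thesis unfolding mom_def .
qed

theorem mainTheorem6:
  fixes \<beta> :: "nat \<Rightarrow> qfield"
  assumes beta_def: "\<And>n. qQ * (\<Sum>k\<le>n. of_nat (n choose k) * qQ ^ k * \<beta> k) - \<beta> n
                 = (if n = 0 then qQ - 1 else if n = 1 then 1 else 0)"
  shows "moments_of (\<lambda>n. Fract (poly_integral (qbc_poly \<beta> n)) 1 / zK) P_seq"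
  by (rule generic_moments[OF qK0 qKn zK0 SK0 H4K H5K partB[OF beta_def] P_seq_eq])

end
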